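(* Let $R$ be a globally perinormal domain and $W$ a multiplicative subset of $R$. Then $R_W$ is globally perinormal.
   Context: All rings are commutative with identity; an overring of a domain $R$ is a ring between $R$ and its fraction field. A ring extension $A \subseteq B$ satisfies going-down if whenever $\mathfrak{p} \subset \mathfrak{q}$ are primes of $A$ and $Q$ is a prime of $B$ with $Q \cap A = \mathfrak{q}$, there is a prime $P \subseteq Q$ of $B$ with $P \cap A = \mathfrak{p}$. A domain $R$ is globally perinormal if every overring $S$ of $R$ such that $R \subseteq S$ satisfies going-down is a localization of $R$ at some multiplicative set. *)

theory Defs
  imports Main
begin

text \<open>Domains are modelled as subrings of a field K (the type 'a); every domain
arises this way (embed it in its fraction field), and all notions below are
invariant under ring isomorphism.\<close>

definition subring :: "'a::field set \<Rightarrow> bool" where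
  "subring A \<longleftrightarrow> 0 \<in> A \<and> 1 \<in> A \<and>
     (\<forall>x\<in>A. \<forall>y\<in>A. x + y \<in> A \<and> x * y \<in> A) \<and> (\<forall>x\<in>A. - x \<in> A)"

definition frac_field :: "'a::field set \<Rightarrow> 'a set" where
  "frac_field R = {a / b | a b. a \<in> R \<and> b \<in> R \<and> b \<noteq> 0}"

definition overring :: "'a::field set \<Rightarrow> 'a set \<Rightarrow> bool" where
  "overring R S \<longleftrightarrow> subring S \<and> R \<subseteq> S \<and> S \<subseteq> frac_field R"

definition prime_ideal_of :: "'a::field set \<Rightarrow> 'a set \<Rightarrow> bool" where
  "prime_ideal_of A P \<longleftrightarrow> P \<subseteq> A \<and> 0 \<in> P \<and>
     (\<forall>x\<in>P. \<forall>y\<in>P. x + y \<in> P) \<and>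
     (\<forall>a\<in>A. \<forall>x\<in>P. a * x \<in> P) \<and>
     P \<noteq> A \<and>
     (\<forall>a\<in>A. \<forall>b\<in>A. a * b \<in> P \<longrightarrow> a \<in> P \<or> b \<in> P)"

definition going_down :: "'a::field set \<Rightarrow> 'a set \<Rightarrow> bool" where
  "going_down A B \<longleftrightarrow>
     (\<forall>p q Q. prime_ideal_of A p \<longrightarrow> prime_ideal_of A q \<longrightarrow> p \<subseteq> q \<longrightarrow>
        prime_ideal_of B Q \<longrightarrow> Q \<inter> A = q \<longrightarrow>
        (\<exists>P. prime_ideal_of B P \<and> P \<subseteq> Q \<and> P \<inter> A = p))"

text \<open>Multiplicative subset of R (not containing 0, so that R_W is a domain).\<close>
definition mult_subset :: "'a::field set \<Rightarrow> 'a set \<Rightarrow> bool" where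
  "mult_subset R W \<longleftrightarrow> W \<subseteq> R \<and> 1 \<in> W \<and> 0 \<notin> W \<and>
     (\<forall>x\<in>W. \<forall>y\<in>W. x * y \<in> W)"

definition localization :: "'a::field set \<Rightarrow> 'a set \<Rightarrow> 'a set" where
  "localization R W = {a / w | a w. a \<in> R \<and> w \<in> W}"

definition globally_perinormal :: "'a::field set \<Rightarrow> bool" where
  "globally_perinormal R \<longleftrightarrow>
     (\<forall>S. overring R S \<longrightarrow> going_down R S \<longrightarrow>
        (\<exists>W. mult_subset R W \<and> S = localization R W))"

end

theory Submission imports Defs begin
lemma R_sub_loc:
  assumes "mult_subset R W" shows "R \<subseteq> localization R W"
proof
  fix r assume "r \<in> R"
  moreover have "1 \<in> W" using assms unfolding mult_subset_def by auto
  ultimately show "r \<in> localization R W" unfolding localization_def by force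
qed

lemma one_notin_prime:
  assumes "subring S" "prime_ideal_of S Q" shows "(1::'a::field) \<notin> Q"
proof
  assume "1 \<in> Q"
  then have "\<forall>a\<in>S. a \<in> Q" using assms unfolding prime_ideal_of_def
    by (metis mult.right_neutral)
  then show False using assms unfolding prime_ideal_of_def by auto
qed

lemma prime_contract:
  assumes "subring S" "prime_ideal_of S Q" "subring A" "A \<subseteq> S"
  shows "prime_ideal_of A (Q \<inter> A)"
proof -
  have "1 \<notin> Q" using one_notin_prime assms by blast
  moreover have "1 \<in> A" using assms(3) unfolding subring_def by auto
  ultimately have "Q \<inter> A \<noteq> A" by blast
  moreover have "0 \<in> A" using assms(3) unfolding subring_def by auto
  ultimately show ?thesis using assms unfolding prime_ideal_of_def subring_def
    by (simp add: subset_iff)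
qed

lemma inv_in_S:
  assumes "mult_subset R W" "subring R" "localization R W \<subseteq> S" "w \<in> W"
  shows "1 / w \<in> S"
proof -
  have "1 \<in> R" using assms(2) unfolding subring_def by auto
  then have "1 / w \<in> localization R W" using assms(4) unfolding localization_def by blast
  then show ?thesis using assms(3) by blast
qed

theorem proposition6p1:
  fixes R W :: "'a::field set"
  assumes "subring R"
    and "globally_perinormal R"
    and "mult_subset R W"
  shows "globally_perinormal (localization R W)"
  unfolding globally_perinormal_def
proof (intro allI impI)
  fix S assume ov: "overring (localization R W) S" and gd: "going_down (localization R W) S"
  define R' where "R' = localization R W"
  have W: "W \<subseteq> R" "1 \<in> W" "0 \<notin> W" "\<And>x y. x \<in> W \<Longrightarrow> y \<in> W \<Longrightarrow> x * y \<in> W"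
    using assms(3) unfolding mult_subset_def by auto
  have RR': "R \<subseteq> R'" using R_sub_loc assms(3) R'_def by blast
  have subS: "subring S" and R'S: "R' \<subseteq> S" and Sfr: "S \<subseteq> frac_field R'"
    using ov unfolding overring_def R'_def by auto
  have Rs: "0 \<in> R" "1 \<in> R" "\<And>x y. x \<in> R \<Longrightarrow> y \<in> R \<Longrightarrow> x + y \<in> R"
     "\<And>x y. x \<in> R \<Longrightarrow> y \<in> R \<Longrightarrow> x * y \<in> R" "\<And>x. x \<in> R \<Longrightarrow> - x \<in> R"
    using assms(1) unfolding subring_def by auto
  have subR': "subring R'"
  proof -
    have "a/w + b/v \<in> R'" if "a \<in> R" "b \<in> R" "w \<in> W" "v \<in> W" for a b w v
    proof -
      have "w \<noteq> 0" "v \<noteq> 0" using W that by auto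
      then have "a/w + b/v = (a*v + b*w)/(w*v)" by (simp add: field_simps)
      moreover have "a*v + b*w \<in> R" using Rs(3,4) W(1) that by blast
      moreover have "w*v \<in> W" using W(4) that by blast
      ultimately show ?thesis unfolding R'_def localization_def by blast
    qed
    moreover have "(a/w) * (b/v) \<in> R'" if "a \<in> R" "b \<in> R" "w \<in> W" "v \<in> W" for a b w v
    proof -
      have "(a/w) * (b/v) = (a*b)/(w*v)" by simp
      moreover have "a*b \<in> R" using Rs(4) that by blast
      moreover have "w*v \<in> W" using W(4) that by blast
      ultimately show ?thesis unfolding R'_def localization_def by blast
    qed
    moreover have "- (a/w) \<in> R'" if "a \<in> R" "w \<in> W" for a w
    proof -
      have "- (a/w) = (-a)/w" by simp
      then show ?thesis using Rs(5) that unfolding R'_def localization_def by blast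
    qed
    ultimately have c: "\<forall>x\<in>R'. \<forall>y\<in>R'. x + y \<in> R' \<and> x * y \<in> R'" "\<forall>x\<in>R'. - x \<in> R'"
      unfolding R'_def localization_def by blast+
    have "0 \<in> R'" "1 \<in> R'" using RR' Rs(1,2) by blast+
    then show ?thesis using c unfolding subring_def by blast
  qed
  have inv: "\<And>w. w \<in> W \<Longrightarrow> 1 / w \<in> S"
    using inv_in_S[OF assms(3) assms(1)] R'S R'_def by blast
  have ovR: "overring R S"
    unfolding overring_def
  proof (intro conjI)
    show "subring S" by fact
    show "R \<subseteq> S" using RR' R'S by blast
    show "S \<subseteq> frac_field R"
    proof
      fix s assume "s \<in> S"
      then obtain x y where xy: "s = x / y" "x \<in> R'" "y \<in> R'" "y \<noteq> 0"
        using Sfr unfolding frac_field_def by blast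
      obtain a w where aw: "x = a / w" "a \<in> R" "w \<in> W" using xy(2) unfolding R'_def localization_def by blast
      obtain b v where bv: "y = b / v" "b \<in> R" "v \<in> W" using xy(3) unfolding R'_def localization_def by blast
      have nz: "w \<noteq> 0" "v \<noteq> 0" "b \<noteq> 0" using W aw bv xy by auto
      have "s = (a*v)/(w*b)" using xy aw bv nz by (simp add: field_simps)
      moreover have "a*v \<in> R" "w*b \<in> R" "w*b \<noteq> 0" using Rs W aw bv nz by auto
      ultimately show "s \<in> frac_field R" unfolding frac_field_def by blast
    qed
  qed
  have gdR: "going_down R S"
    unfolding going_down_def
  proof (intro allI impI)
    fix p q Q
    assume pp: "prime_ideal_of R p" and pq: "prime_ideal_of R q" and sub: "p \<subseteq> q"
      and pQ: "prime_ideal_of S Q" and Qq: "Q \<inter> R = q"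
    have one: "1 \<notin> Q" using one_notin_prime subS pQ by blast
    have Qideal: "\<And>s x. s \<in> S \<Longrightarrow> x \<in> Q \<Longrightarrow> s * x \<in> Q" using pQ unfolding prime_ideal_of_def by blast
    have qW: "w \<notin> q" if "w \<in> W" for w
    proof
      assume "w \<in> q"
      then have "w \<in> Q" using Qq by blast
      then have "(1/w) * w \<in> Q" using Qideal[OF inv[OF that]] by blast
      moreover have "w \<noteq> 0" using W that by auto
      ultimately show False using one by simp
    qed
    have pW: "w \<notin> p" if "w \<in> W" for w using qW[OF that] sub by blast
    have pI: "p \<subseteq> R" "0 \<in> p" "\<And>x y. x \<in> p \<Longrightarrow> y \<in> p \<Longrightarrow> x + y \<in> p"
      "\<And>a x. a \<in> R \<Longrightarrow> x \<in> p \<Longrightarrow> a * x \<in> p"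
      "\<And>a b. a \<in> R \<Longrightarrow> b \<in> R \<Longrightarrow> a * b \<in> p \<Longrightarrow> a \<in> p \<or> b \<in> p"
      using pp unfolding prime_ideal_of_def by blast+
    define p' where "p' = {a / w | a w. a \<in> p \<and> w \<in> W}"
    have p'R: "p' \<inter> R = p"
    proof
      show "p' \<inter> R \<subseteq> p"
      proof
        fix r assume "r \<in> p' \<inter> R"
        then obtain a w where aw: "r = a / w" "a \<in> p" "w \<in> W" "r \<in> R" unfolding p'_def by blast
        have "w \<noteq> 0" using W(3) aw(3) by auto
        then have "w * r = a" using aw by simp
        then have "w * r \<in> p" using aw by simp
        moreover have "w \<in> R" using W(1) aw by blast
        ultimately show "r \<in> p" using pI(5)[of w r] pW[OF aw(3)] aw(4) by blast
      qed
      show "p \<subseteq> p' \<inter> R"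
      proof
        fix r assume "r \<in> p"
        then have "r = r / 1" "r \<in> R" using pI(1) by auto
        then show "r \<in> p' \<inter> R" using \<open>r \<in> p\<close> W(2) unfolding p'_def by blast
      qed
    qed
    have pp': "prime_ideal_of R' p'"
      unfolding prime_ideal_of_def
    proof (intro conjI ballI impI)
      show "p' \<subseteq> R'" using pI(1) unfolding p'_def R'_def localization_def by blast
      show "0 \<in> p'" using pI(2) W(2) unfolding p'_def by force
    next
      fix x y assume "x \<in> p'" "y \<in> p'"
      then obtain a w b v where h: "x = a/w" "a \<in> p" "w \<in> W" "y = b/v" "b \<in> p" "v \<in> W"
        unfolding p'_def by blast
      have "w \<noteq> 0" "v \<noteq> 0" using W h by auto
      then have "x + y = (v*a + w*b)/(w*v)" using h by (simp add: field_simps)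
      moreover have "v*a + w*b \<in> p" using pI(3)[OF pI(4) pI(4)] W(1) h by blast
      moreover have "w*v \<in> W" using W(4) h by blast
      ultimately show "x + y \<in> p'" unfolding p'_def by blast
    next
      fix r x assume "r \<in> R'" "x \<in> p'"
      then obtain a w b v where h: "r = b/v" "b \<in> R" "v \<in> W" "x = a/w" "a \<in> p" "w \<in> W"
        unfolding p'_def R'_def localization_def by blast
      have "r * x = (b*a)/(v*w)" using h by simp
      moreover have "b*a \<in> p" using pI(4) h by blast
      moreover have "v*w \<in> W" using W(4) h by blast
      ultimately show "r * x \<in> p'" unfolding p'_def by blast
    next
      show "p' \<noteq> R'"
      proof
        assume "p' = R'"
        then have "1 \<in> p'" using subR' unfolding subring_def by auto
        then obtain a w where h: "1 = a/w" "a \<in> p" "w \<in> W" unfolding p'_def by blast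
        have "w \<noteq> 0" using W h by auto
        then have "a = w" using h by (simp add: field_simps)
        then show False using h(2,3) pW by blast
      qed
    next
      fix x y assume xy: "x \<in> R'" "y \<in> R'" "x * y \<in> p'"
      then obtain a w b v where h: "x = a/w" "a \<in> R" "w \<in> W" "y = b/v" "b \<in> R" "v \<in> W"
        unfolding R'_def localization_def by blast
      obtain c u where cu: "x * y = c/u" "c \<in> p" "u \<in> W" using xy(3) unfolding p'_def by blast
      have nz: "w \<noteq> 0" "v \<noteq> 0" "u \<noteq> 0" using W h cu by auto
      have e: "(a/w)*(b/v) = c/u" using h(1,4) cu(1) by simp
      have "u * (a * b) = c * (w * v)"
      proof -
        have "(a*b)/(w*v) = c/u" using e by simp
        then show ?thesis using nz by (simp add: frac_eq_eq mult.commute)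
      qed
      moreover have "w * v \<in> R" using W h by blast
      then have "c * (w * v) \<in> p" using pI(4) cu(2) by (metis mult.commute)
      ultimately have "u * (a*b) \<in> p" by simp
      moreover have "u \<in> R" "a * b \<in> R" using W(1) cu(3) Rs(4) h by blast+
      ultimately have "a * b \<in> p" using pI(5)[of u "a*b"] pW[OF cu(3)] by blast
      then have "a \<in> p \<or> b \<in> p" using pI(5) h(2,5) by blast
      then show "x \<in> p' \<or> y \<in> p'" using h(1,3,4,6) unfolding p'_def by blast
    qed
    have pQ': "prime_ideal_of R' (Q \<inter> R')" using prime_contract[OF subS pQ subR' R'S] .
    have p'Q: "p' \<subseteq> Q \<inter> R'"
    proof
      fix x assume "x \<in> p'"
      then obtain a w where h: "x = a/w" "a \<in> p" "w \<in> W" unfolding p'_def by blast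
      have "a \<in> Q" using h sub Qq by blast
      then have "(1/w) * a \<in> Q" using Qideal[OF inv[OF h(3)]] by blast
      moreover have "x \<in> R'" using \<open>x \<in> p'\<close> pp' unfolding prime_ideal_of_def by blast
      ultimately show "x \<in> Q \<inter> R'" using h by simp
    qed
    obtain P where P: "prime_ideal_of S P" "P \<subseteq> Q" "P \<inter> R' = p'"
      using gd[unfolded going_down_def, rule_format, OF pp'[unfolded R'_def] pQ'[unfolded R'_def] p'Q[unfolded R'_def] pQ refl]
      unfolding R'_def by blast
    have "P \<inter> R = p" using P(3) p'R RR' by blast
    then show "\<exists>P. prime_ideal_of S P \<and> P \<subseteq> Q \<and> P \<inter> R = p" using P by blast
  qed
  obtain U where U: "mult_subset R U" "S = localization R U"
    using assms(2) ovR gdR unfolding globally_perinormal_def by blast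
  have "mult_subset R' U" using U(1) RR' unfolding mult_subset_def by blast
  moreover have "S = localization R' U"
  proof
    show "S \<subseteq> localization R' U"
      using U(2) RR' unfolding localization_def by blast
    show "localization R' U \<subseteq> S"
    proof
      fix x assume "x \<in> localization R' U"
      then obtain r u where h: "x = r / u" "r \<in> R'" "u \<in> U" unfolding localization_def by blast
      have "1 / u \<in> S" using U(2) h(3) Rs(2) unfolding localization_def by blast
      moreover have "r \<in> S" using h R'S by blast
      ultimately have "r * (1/u) \<in> S" using subS unfolding subring_def by blast
      then show "x \<in> S" using h by simp
    qed
  qed
  ultimately show "\<exists>V. mult_subset (localization R W) V \<and> S = localization (localization R W) V"
    unfolding R'_def by blast
qed

end
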